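(* Let $X$ be a nonempty set and $S$ a regular semigroup. Then every one-to-one mapping $\phi':X\to E(S)$ can be extended to a skeleton mapping $\phi:\Gamma(X)\to E(S^1)$ (i.e. $x\phi=x\phi'$ for all $x\in X$).
   Context: Let $1$ be a symbol not in $X$. Elements of height $\ge 2$ are triples $g=(g^l,g^c,g^r)$; $\Gamma_0(X)=\{1\}$, $\Gamma_1(X)=X$, each $x\in X$ identified with $(1,x,1)$; for $i\ge 2$, $\Gamma_i(X)$ is the set of triples $g\in\Gamma_{i-1}(X)\times\Gamma_{i-2}(X)\times\Gamma_{i-1}(X)$ with $g^l\neq g^r$ and $g^c\in\{(g^l)^l,(g^l)^r\}\cap\{(g^r)^l,(g^r)^r\}$; $\Gamma(X)=\bigcup_{i\ge0}\Gamma_i(X)$. $S^1$ is $S$ with an identity adjoined if necessary; $E(\cdot)$ is the set of idempotents. For idempotents $e,f$ of a semigroup $R$, $S(e,f)=\{h\in E(R): fh=h=he,\ ehf=ef\}$. A skeleton mapping is a mapping $\phi:\Gamma(X)\to E(S^1)$ such that (i) $\phi|_X$ is one-to-one with $X\phi\subseteq E(S)$; (ii) $(1\phi)(g\phi)=g\phi=(g\phi)(1\phi)$ for all $g\in X$; (iii) $g\phi\in S\big((g^r\phi)(g^c\phi),(g^c\phi)(g^l\phi)\big)$ (in $S^1$) for all $g\in\Gamma_i(X)$, $i\ge2$. *)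

theory Defs
  imports Main
begin

text \<open>Elements of Gamma(X): the symbol 1 (One), generators x (Gen x, identified with (1,x,1)),
  and triples (g^l, g^c, g^r) (Tri).\<close>
datatype 'x gam = One | Gen 'x | Tri "'x gam" "'x gam" "'x gam"

fun gl :: "'x gam \<Rightarrow> 'x gam" where
  "gl One = One" | "gl (Gen x) = One" | "gl (Tri l c r) = l"
fun gc :: "'x gam \<Rightarrow> 'x gam" where
  "gc One = One" | "gc (Gen x) = Gen x" | "gc (Tri l c r) = c"
fun gr :: "'x gam \<Rightarrow> 'x gam" where
  "gr One = One" | "gr (Gen x) = One" | "gr (Tri l c r) = r"

fun Gam :: "'x set \<Rightarrow> nat \<Rightarrow> 'x gam set" where
  "Gam X 0 = {One}"
| "Gam X (Suc 0) = Gen ` X"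
| "Gam X (Suc (Suc i)) =
     {Tri l c r | l c r. l \<in> Gam X (Suc i) \<and> c \<in> Gam X i \<and> r \<in> Gam X (Suc i) \<and> l \<noteq> r
        \<and> c \<in> {gl l, gr l} \<inter> {gl r, gr r}}"

definition GamAll :: "'x set \<Rightarrow> 'x gam set" where
  "GamAll X = (\<Union>i. Gam X i)"

definition regular_semigroup :: "'a::semigroup_mult itself \<Rightarrow> bool" where
  "regular_semigroup _ \<longleftrightarrow> (\<forall>a::'a. \<exists>x. a * x * a = a)"

definition idems :: "'a::semigroup_mult set" where
  "idems = {e. e * e = e}"

text \<open>S^1 is modelled inside 'a option, None being the adjoined identity; if S already
  has an identity, S^1 = S (the image of Some).\<close>
definition has_identity :: "'a::semigroup_mult itself \<Rightarrow> bool" where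
  "has_identity _ \<longleftrightarrow> (\<exists>e::'a. \<forall>s. e * s = s \<and> s * e = s)"

fun mult1 :: "'a::semigroup_mult option \<Rightarrow> 'a option \<Rightarrow> 'a option" where
  "mult1 None u = u"
| "mult1 (Some a) None = Some a"
| "mult1 (Some a) (Some b) = Some (a * b)"

definition S1 :: "'a::semigroup_mult option set" where
  "S1 = (if has_identity TYPE('a) then range Some else UNIV)"

definition idems1 :: "'a::semigroup_mult option set" where
  "idems1 = {u \<in> S1. mult1 u u = u}"

definition sandwich1 :: "'a::semigroup_mult option \<Rightarrow> 'a option \<Rightarrow> 'a option set" where
  "sandwich1 e f = {h \<in> idems1. mult1 f h = h \<and> mult1 h e = h
      \<and> mult1 (mult1 e h) f = mult1 e f}"

definition skeleton_mapping :: "'x set \<Rightarrow> ('x gam \<Rightarrow> 'a::semigroup_mult option) \<Rightarrow> bool" where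
  "skeleton_mapping X \<phi> \<longleftrightarrow>
     (\<forall>g \<in> GamAll X. \<phi> g \<in> idems1)
   \<and> inj_on (\<lambda>x. \<phi> (Gen x)) X
   \<and> (\<forall>x\<in>X. \<phi> (Gen x) \<in> Some ` idems)
   \<and> (\<forall>x\<in>X. mult1 (\<phi> One) (\<phi> (Gen x)) = \<phi> (Gen x) \<and> mult1 (\<phi> (Gen x)) (\<phi> One) = \<phi> (Gen x))
   \<and> (\<forall>i\<ge>2. \<forall>g \<in> Gam X i.
        \<phi> g \<in> sandwich1 (mult1 (\<phi> (gr g)) (\<phi> (gc g))) (mult1 (\<phi> (gc g)) (\<phi> (gl g))))"

end

theory Submission
  imports Defs
begin

lemma mult1_assoc: "mult1 (mult1 a b) c = mult1 a (mult1 b (c::'a::semigroup_mult option))"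
  by (cases a; cases b; cases c) (auto simp: mult.assoc)

lemma mult1_S1: "u \<in> S1 \<Longrightarrow> v \<in> S1 \<Longrightarrow> mult1 u v \<in> S1"
  by (cases u; cases v) (auto simp: S1_def split: if_splits)

definition unit1 :: "'a::semigroup_mult option" where
  "unit1 = (if has_identity TYPE('a) then Some (SOME e::'a. \<forall>s. e * s = s \<and> s * e = s) else None)"

lemma unit1_S1: "unit1 \<in> S1"
  by (auto simp: unit1_def S1_def)

lemma unit1_mult: "(v::'a::semigroup_mult option) \<in> S1 \<Longrightarrow> mult1 unit1 v = v \<and> mult1 v unit1 = v"
proof (cases "has_identity TYPE('a)")
  case True
  then have "\<exists>e::'a. \<forall>s. e * s = s \<and> s * e = s" unfolding has_identity_def .
  then have e: "\<forall>s. (SOME e::'a. \<forall>s. e * s = s \<and> s * e = s) * s = s \<and> s * (SOME e::'a. \<forall>s. e * s = s \<and> s * e = s) = s"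
    by (rule someI_ex)
  assume "v \<in> S1"
  with True obtain s where "v = Some s" by (auto simp: S1_def)
  then show ?thesis using True e by (simp add: unit1_def)
next
  case False
  then show ?thesis by (cases v) (auto simp: unit1_def)
qed

definition inv1 :: "'a::semigroup_mult option \<Rightarrow> 'a option" where
  "inv1 u = (SOME v. v \<in> S1 \<and> mult1 (mult1 u v) u = u \<and> mult1 (mult1 v u) v = v)"

lemma inv1_ex:
  assumes reg: "regular_semigroup TYPE('a::semigroup_mult)" and u: "(u::'a option) \<in> S1"
  shows "\<exists>v. v \<in> S1 \<and> mult1 (mult1 u v) u = u \<and> mult1 (mult1 v u) v = v"
proof -
  have "\<exists>y. y \<in> S1 \<and> mult1 (mult1 u y) u = u"
  proof (cases u)
    case None then show ?thesis using u by auto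
  next
    case (Some s)
    from reg obtain t where "s * t * s = s" unfolding regular_semigroup_def by blast
    then show ?thesis using Some u by (intro exI[of _ "Some t"]) (auto simp: S1_def)
  qed
  then obtain y where y: "y \<in> S1" "mult1 (mult1 u y) u = u" by blast
  let ?v = "mult1 (mult1 y u) y"
  have "?v \<in> S1" using y u by (simp add: mult1_S1)
  moreover have "mult1 (mult1 u ?v) u = u" using y by (simp add: mult1_assoc)
  moreover have "mult1 (mult1 ?v u) ?v = ?v"
  proof -
    have y': "mult1 u (mult1 y (mult1 u z)) = mult1 u z" for z
      using y(2) by (metis mult1_assoc)
    show ?thesis by (simp add: mult1_assoc y')
  qed
  ultimately show ?thesis by blast
qed

lemma inv1_prop:
  assumes "regular_semigroup TYPE('a::semigroup_mult)" "(u::'a option) \<in> S1"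
  shows "inv1 u \<in> S1 \<and> mult1 (mult1 u (inv1 u)) u = u \<and> mult1 (mult1 (inv1 u) u) (inv1 u) = inv1 u"
  unfolding inv1_def by (rule someI_ex[OF inv1_ex[OF assms]])

fun phi :: "('x \<Rightarrow> 'a::semigroup_mult) \<Rightarrow> 'x gam \<Rightarrow> 'a option" where
  "phi f One = unit1"
| "phi f (Gen x) = Some (f x)"
| "phi f (Tri l c r) =
     (let a = mult1 (phi f r) (phi f c); b = mult1 (phi f c) (phi f l)
      in mult1 (mult1 b (inv1 (mult1 a b))) a)"

lemma phi_S1: "regular_semigroup TYPE('a::semigroup_mult) \<Longrightarrow> phi (f::'x \<Rightarrow> 'a) g \<in> S1"
proof (induction g)
  case One then show ?case by (simp add: unit1_S1)
next
  case (Gen x) then show ?case by (simp add: S1_def)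
next
  case (Tri l c r)
  then show ?case by (simp add: Let_def mult1_S1 inv1_prop)
qed

lemma key:
  assumes reg: "regular_semigroup TYPE('a::semigroup_mult)"
    and S: "(l::'a option) \<in> S1" "c \<in> S1" "r \<in> S1"
    and L: "mult1 (mult1 l c) l = l" and R: "mult1 (mult1 r c) r = r" and C: "mult1 c c = c"
    and a: "a = mult1 r c" and b: "b = mult1 c l"
    and h: "h = mult1 (mult1 b (inv1 (mult1 a b))) a"
  shows "h \<in> S1 \<and> mult1 h h = h \<and> mult1 b h = h \<and> mult1 h a = h \<and> mult1 (mult1 a h) b = mult1 a b
     \<and> mult1 (mult1 h l) h = h \<and> mult1 (mult1 h r) h = h"
proof -
  have aS: "a \<in> S1" and bS: "b \<in> S1" using S a b by (auto simp: mult1_S1)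
  define x where "x = inv1 (mult1 a b)"
  have x: "x \<in> S1" "mult1 (mult1 (mult1 a b) x) (mult1 a b) = mult1 a b"
      "mult1 (mult1 x (mult1 a b)) x = x"
    using inv1_prop[OF reg mult1_S1[OF aS bS]] x_def by auto
  have bb: "mult1 b b = b" using L b by (metis mult1_assoc)
  have aa: "mult1 a a = a" using R a by (metis mult1_assoc)
  have C': "mult1 c (mult1 c z) = mult1 c z" for z using C by (metis mult1_assoc)
  have hS: "h \<in> S1" using h x aS bS x_def by (simp add: mult1_S1)
  have hh: "mult1 h h = h"
    using h x_def x(3) by (metis mult1_assoc)
  have bh: "mult1 b h = h" using h bb by (metis mult1_assoc)
  have ha: "mult1 h a = h" using h aa by (metis mult1_assoc)
  have ahb: "mult1 (mult1 a h) b = mult1 a b" using h x_def x(2) by (metis mult1_assoc)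
  have hlh: "mult1 (mult1 h l) h = h"
  proof -
    have L': "mult1 l (mult1 c (mult1 l z)) = mult1 l z" for z
      using L by (metis mult1_assoc)
    have "mult1 a (mult1 l b) = mult1 a b" using a b C L by (simp add: mult1_assoc L' C')
    then show ?thesis using h hh by (metis mult1_assoc)
  qed
  have hrh: "mult1 (mult1 h r) h = h"
  proof -
    have R': "mult1 r (mult1 c (mult1 r z)) = mult1 r z" for z
      using R by (metis mult1_assoc)
    have "mult1 (mult1 a r) b = mult1 a b" using a b C R by (simp add: mult1_assoc R' C')
    then show ?thesis using h hh by (metis mult1_assoc)
  qed
  show ?thesis using hS hh bh ha ahb hlh hrh by blast
qed

lemma good:
  assumes reg: "regular_semigroup TYPE('a::semigroup_mult)"
  shows "(f::'x \<Rightarrow> 'a) ` X \<subseteq> idems \<Longrightarrow> g \<in> Gam X i \<Longrightarrow> phi f g \<in> idems1 \<and>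
     (\<forall>d \<in> {gl g, gr g}. mult1 (mult1 (phi f g) (phi f d)) (phi f g) = phi f g)"
proof (induction X i arbitrary: g rule: Gam.induct)
  case (1 X)
  then show ?case using unit1_mult[OF unit1_S1] unit1_S1 by (auto simp: idems1_def)
next
  case (2 X)
  then obtain x where x: "g = Gen x" "x \<in> X" and fX: "f ` X \<subseteq> idems" by auto
  have S: "Some (f x) \<in> S1" by (auto simp: S1_def)
  have "f x * f x = f x" using fX x(2) by (auto simp: idems_def)
  then show ?case using x S unit1_mult[OF S] by (auto simp: idems1_def)
next
  case (3 X i)
  from "3.prems"(2) obtain l c r where g: "g = Tri l c r" and l: "l \<in> Gam X (Suc i)" and c: "c \<in> Gam X i"
    and r: "r \<in> Gam X (Suc i)" and cl: "c \<in> {gl l, gr l}" and cr: "c \<in> {gl r, gr r}" by auto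
  have IHl: "phi f l \<in> idems1" "mult1 (mult1 (phi f l) (phi f c)) (phi f l) = phi f l"
    using 3(1)[OF "3.prems"(1) l] cl by auto
  have IHr: "phi f r \<in> idems1" "mult1 (mult1 (phi f r) (phi f c)) (phi f r) = phi f r"
    using 3(1)[OF "3.prems"(1) r] cr by auto
  have IHc: "phi f c \<in> idems1" using 3(2)[OF "3.prems"(1) c] by auto
  note K = key[OF reg _ _ _ IHl(2) IHr(2) _ refl refl refl]
  show ?case using K IHl IHr IHc g by (auto simp: idems1_def Let_def)
qed

theorem lemma5p3:
  fixes X :: "'x set" and \<phi>' :: "'x \<Rightarrow> 'a::semigroup_mult"
  assumes "X \<noteq> {}"
    and "regular_semigroup TYPE('a)"
    and "inj_on \<phi>' X"
    and "\<phi>' ` X \<subseteq> idems"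
  shows "\<exists>\<phi> :: 'x gam \<Rightarrow> 'a option.
           skeleton_mapping X \<phi> \<and> (\<forall>x\<in>X. \<phi> (Gen x) = Some (\<phi>' x))"
proof (intro exI conjI)
  let ?p = "phi \<phi>'"
  have G: "g \<in> Gam X i \<Longrightarrow> ?p g \<in> idems1 \<and>
     (\<forall>d \<in> {gl g, gr g}. mult1 (mult1 (?p g) (?p d)) (?p g) = ?p g)" for g i
    using good[OF assms(2) assms(4)] by blast
  show "\<forall>x\<in>X. ?p (Gen x) = Some (\<phi>' x)" by simp
  have S5: "?p g \<in> sandwich1 (mult1 (?p (gr g)) (?p (gc g))) (mult1 (?p (gc g)) (?p (gl g)))"
    if i: "i \<ge> 2" and g: "g \<in> Gam X i" for i g
  proof -
    obtain j where j: "i = Suc (Suc j)" using i by (metis add_2_eq_Suc le_Suc_ex)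
    from g j obtain l c r where g: "g = Tri l c r" and l: "l \<in> Gam X (Suc j)" and c: "c \<in> Gam X j"
      and r: "r \<in> Gam X (Suc j)" and cl: "c \<in> {gl l, gr l}" and cr: "c \<in> {gl r, gr r}" by auto
    have IHl: "?p l \<in> idems1" "mult1 (mult1 (?p l) (?p c)) (?p l) = ?p l"
      using G[OF l] cl by auto
    have IHr: "?p r \<in> idems1" "mult1 (mult1 (?p r) (?p c)) (?p r) = ?p r"
      using G[OF r] cr by auto
    have IHc: "?p c \<in> idems1" using G[OF c] by auto
    note K = key[OF assms(2) _ _ _ IHl(2) IHr(2) _ refl refl refl]
    show ?thesis using K IHl IHr IHc g by (auto simp: idems1_def sandwich1_def Let_def)
  qed
  show "skeleton_mapping X ?p"
    unfolding skeleton_mapping_def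
  proof (intro conjI ballI allI impI)
    show "?p g \<in> idems1" if "g \<in> GamAll X" for g using that G by (auto simp: GamAll_def)
    show "inj_on (\<lambda>x. ?p (Gen x)) X" using assms(3) by (auto simp: inj_on_def)
    show "?p (Gen x) \<in> Some ` idems" if "x \<in> X" for x using that assms(4) by auto
    fix x assume x: "x \<in> X"
    have S: "Some (\<phi>' x) \<in> S1" by (auto simp: S1_def)
    show "mult1 (?p One) (?p (Gen x)) = ?p (Gen x)" using unit1_mult[OF S] by simp
    show "mult1 (?p (Gen x)) (?p One) = ?p (Gen x)" using unit1_mult[OF S] by simp
  next
    fix i g assume "2 \<le> i" "g \<in> Gam X i"
    then show "?p g \<in> sandwich1 (mult1 (?p (gr g)) (?p (gc g))) (mult1 (?p (gc g)) (?p (gl g)))"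
      by (rule S5)
  qed
qed

end
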